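(* Let $\mathcal F$ be a symmetric conservative clone with carrier $A$. Then $\rhd_0=\rhd_1=\mathrm R_2(\mathcal F)\cap(A^2_2\times A^2_2)$, and one of the following five cases holds, where in each case the stated equivalence holds for both $i=0$ and $i=1$ and for all $\mathbf x,\mathbf y\in A^2_2$: (1) $\mathbf x\rhd_i\mathbf y$ always; (2) $\mathbf x\rhd_i\mathbf y\iff\mathrm t(\mathbf x,\mathbf y)=0$; (3) $\mathbf x\rhd_i\mathbf y\iff\mathrm t(\mathbf x,\mathbf y)\in\{0,1\}$; (4) $|A|=4$ and $\mathbf x\rhd_i\mathbf y\iff\mathrm t(\mathbf x,\mathbf y)\in\{0,1,2\}$; (5) $|A|=3$ and $\mathbf x\rhd_i\mathbf y\iff\mathrm t(\mathbf x,\mathbf y)\in\{0,01,10\}$.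
   Context: $\mathcal O(A)=\bigcup_{n<\omega}A^{A^n}$; $\mathcal F_{[2]}=\mathcal F\cap A^{A^2}$; $S_A$ the permutations of $A$. A clone with carrier $A$ is a subset of $\mathcal O(A)$ containing all projections and closed under composition; conservative if $f(\mathbf a)\in\mathrm{ran}\,\mathbf a$ (set of entries) for all members; symmetric if $f_\sigma(\mathbf a)=\sigma^{-1}(f(\sigma(\mathbf a)))$ is a member for each member $f$ and $\sigma\in S_A$. $A^2_2$ is the set of pairs $\mathbf a=a_0a_1$ with $a_0\ne a_1$. $\mathrm R_2(\mathcal F)$: $\mathbf a\,\mathrm R_2(\mathcal F)\,\mathbf b$ iff some $\sigma\in S_A$ has $f(\mathbf b)=\sigma(f(\mathbf a))$ for all $f\in\mathcal F_{[2]}$. For $i\in\{0,1\}$, $\rhd_i$ is the relation on $A^2_2$: $\mathbf a\rhd_i\mathbf b$ iff for every $f\in\mathcal F_{[2]}$, $f(\mathbf a)=a_i$ implies $f(\mathbf b)=b_i$. The type $\mathrm t(\mathbf a,\mathbf b)$ of $\mathbf a=a_0a_1,\mathbf b=b_0b_1\in A^2_2$ is: $0$ if $\mathbf a=\mathbf b$; $1$ if $a_0=b_1$ and $a_1=b_0$; the string $ij$ ($i,j\in\{0,1\}$) if $a_i=b_j$ and $a_{1-i}\ne b_{1-j}$; $2$ if $\{a_0,a_1\}\cap\{b_0,b_1\}=\emptyset$. *)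

theory Defs
  imports Main
begin

text \<open>Tuples in A^n are represented by lists of length n with entries in A.
  An n-ary operation on A (an element of A^(A^n)) is represented extensionally by a
  function on lists which maps A^n into A and is undefined everywhere else.\<close>

definition tuples :: "'a set \<Rightarrow> nat \<Rightarrow> 'a list set" where
  "tuples A n = {xs. length xs = n \<and> set xs \<subseteq> A}"

definition ops :: "'a set \<Rightarrow> nat \<Rightarrow> ('a list \<Rightarrow> 'a) set" where
  "ops A n = {f. (\<forall>xs \<in> tuples A n. f xs \<in> A) \<and> (\<forall>xs. xs \<notin> tuples A n \<longrightarrow> f xs = undefined)}"

definition allops :: "'a set \<Rightarrow> ('a list \<Rightarrow> 'a) set" where
  "allops A = (\<Union>n. ops A n)"

definition proj :: "'a set \<Rightarrow> nat \<Rightarrow> nat \<Rightarrow> 'a list \<Rightarrow> 'a" where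
  "proj A n i = (\<lambda>xs. if xs \<in> tuples A n then xs ! i else undefined)"

definition compose :: "'a set \<Rightarrow> nat \<Rightarrow> ('a list \<Rightarrow> 'a) \<Rightarrow> ('a list \<Rightarrow> 'a) list \<Rightarrow> 'a list \<Rightarrow> 'a" where
  "compose A m f gs = (\<lambda>xs. if xs \<in> tuples A m then f (map (\<lambda>g. g xs) gs) else undefined)"

definition clone :: "'a set \<Rightarrow> ('a list \<Rightarrow> 'a) set \<Rightarrow> bool" where
  "clone A F \<longleftrightarrow> F \<subseteq> allops A
     \<and> (\<forall>n i. i < n \<longrightarrow> proj A n i \<in> F)
     \<and> (\<forall>n m f gs. f \<in> F \<inter> ops A n \<longrightarrow> length gs = n \<longrightarrow> set gs \<subseteq> F \<inter> ops A m
            \<longrightarrow> compose A m f gs \<in> F)"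

definition conservative :: "'a set \<Rightarrow> ('a list \<Rightarrow> 'a) set \<Rightarrow> bool" where
  "conservative A F \<longleftrightarrow> (\<forall>n. \<forall>f \<in> F \<inter> ops A n. \<forall>xs \<in> tuples A n. f xs \<in> set xs)"

definition conj_op :: "'a set \<Rightarrow> nat \<Rightarrow> ('a \<Rightarrow> 'a) \<Rightarrow> ('a list \<Rightarrow> 'a) \<Rightarrow> 'a list \<Rightarrow> 'a" where
  "conj_op A n \<sigma> f = (\<lambda>xs. if xs \<in> tuples A n then inv_into A \<sigma> (f (map \<sigma> xs)) else undefined)"

definition symmetric :: "'a set \<Rightarrow> ('a list \<Rightarrow> 'a) set \<Rightarrow> bool" where
  "symmetric A F \<longleftrightarrow> (\<forall>n. \<forall>f \<in> F \<inter> ops A n. \<forall>\<sigma>. bij_betw \<sigma> A A \<longrightarrow> conj_op A n \<sigma> f \<in> F)"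

text \<open>Pairs a0a1 are represented as Isabelle pairs (a0, a1).\<close>
definition A22 :: "'a set \<Rightarrow> ('a \<times> 'a) set" where
  "A22 A = {(a0, a1). a0 \<in> A \<and> a1 \<in> A \<and> a0 \<noteq> a1}"

definition app2 :: "('a list \<Rightarrow> 'a) \<Rightarrow> 'a \<times> 'a \<Rightarrow> 'a" where
  "app2 f p = f [fst p, snd p]"

definition entry :: "nat \<Rightarrow> 'a \<times> 'a \<Rightarrow> 'a" where
  "entry i p = (if i = 0 then fst p else snd p)"

definition R2 :: "'a set \<Rightarrow> ('a list \<Rightarrow> 'a) set \<Rightarrow> (('a \<times> 'a) \<times> ('a \<times> 'a)) set" where
  "R2 A F = {(a, b). a \<in> A \<times> A \<and> b \<in> A \<times> A \<and>
     (\<exists>\<sigma>. bij_betw \<sigma> A A \<and> (\<forall>f \<in> F \<inter> ops A 2. app2 f b = \<sigma> (app2 f a)))}"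

definition rhd :: "'a set \<Rightarrow> ('a list \<Rightarrow> 'a) set \<Rightarrow> nat \<Rightarrow> (('a \<times> 'a) \<times> ('a \<times> 'a)) set" where
  "rhd A F i = {(a, b). a \<in> A22 A \<and> b \<in> A22 A \<and>
     (\<forall>f \<in> F \<inter> ops A 2. app2 f a = entry i a \<longrightarrow> app2 f b = entry i b)}"

datatype ptype = T0 | T1 | T00 | T01 | T10 | T11 | T2

definition ptyp :: "'a \<times> 'a \<Rightarrow> 'a \<times> 'a \<Rightarrow> ptype" where
  "ptyp a b = (let (a0, a1) = a; (b0, b1) = b in
     if a = b then T0
     else if a0 = b1 \<and> a1 = b0 then T1
     else if a0 = b0 \<and> a1 \<noteq> b1 then T00
     else if a0 = b1 \<and> a1 \<noteq> b0 then T01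
     else if a1 = b0 \<and> a0 \<noteq> b1 then T10
     else if a1 = b1 \<and> a0 \<noteq> b0 then T11
     else if {a0, a1} \<inter> {b0, b1} = {} then T2
     else undefined)"

end

theory Submission
  imports Defs
begin

definition sw :: "'a \<Rightarrow> 'a \<Rightarrow> 'a \<Rightarrow> 'a" where
  "sw a b x = (if x = a then b else if x = b then a else x)"

lemma sw_bij: "a \<in> A \<Longrightarrow> b \<in> A \<Longrightarrow> bij_betw (sw a b) A A"
  by (rule bij_betw_byWitness[where f'="sw a b"]) (auto simp: sw_def)

lemma exists_perm:
  "distinct us \<Longrightarrow> distinct vs \<Longrightarrow> length us = length vs \<Longrightarrow> set us \<subseteq> A \<Longrightarrow> set vs \<subseteq> A
   \<Longrightarrow> \<exists>\<sigma>. bij_betw \<sigma> A A \<and> map \<sigma> us = vs"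
proof (induction us arbitrary: vs)
  case Nil
  then show ?case by (auto intro: bij_betw_id)
next
  case (Cons u us)
  then obtain v vs' where vs: "vs = v # vs'" by (cases vs) auto
  from Cons obtain \<sigma> where s: "bij_betw \<sigma> A A" "map \<sigma> us = vs'" using vs by auto
  have su: "\<sigma> u \<in> A" using s Cons.prems by (auto dest: bij_betwE)
  have nin: "\<sigma> u \<notin> set vs'"
  proof
    assume "\<sigma> u \<in> set vs'"
    then obtain w where w: "w \<in> set us" "\<sigma> w = \<sigma> u" using s(2) by auto
    have "inj_on \<sigma> A" using s(1) bij_betw_def by blast
    then have "w = u" using w Cons.prems by (auto dest: inj_onD)
    then show False using w Cons.prems by auto
  qed
  have vn: "v \<notin> set vs'" using Cons.prems vs by auto
  let ?t = "sw (\<sigma> u) v \<circ> \<sigma>"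
  have "bij_betw ?t A A" using sw_bij[OF su, of v] s(1) Cons.prems vs
    by (auto intro: bij_betw_trans)
  moreover have "map ?t (u # us) = vs"
  proof -
    have "map (sw (\<sigma> u) v) vs' = vs'"
      using nin vn by (induction vs') (auto simp: sw_def)
    then have "map ?t us = vs'" using s(2) by (metis map_map)
    then show ?thesis using vs by (simp add: sw_def)
  qed
  ultimately show ?case by blast
qed

lemma A22_iff[simp]: "(a, b) \<in> A22 A \<longleftrightarrow> a \<in> A \<and> b \<in> A \<and> a \<noteq> b"
  by (simp add: A22_def)

lemma ptyp_simps:
  assumes "a \<noteq> b" "c \<noteq> d"
  shows "ptyp (a,b) (c,d) = T0 \<longleftrightarrow> a = c \<and> b = d"
    "ptyp (a,b) (c,d) = T1 \<longleftrightarrow> a = d \<and> b = c"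
    "ptyp (a,b) (c,d) = T00 \<longleftrightarrow> a = c \<and> b \<noteq> d"
    "ptyp (a,b) (c,d) = T01 \<longleftrightarrow> a = d \<and> b \<noteq> c"
    "ptyp (a,b) (c,d) = T10 \<longleftrightarrow> b = c \<and> a \<noteq> d"
    "ptyp (a,b) (c,d) = T11 \<longleftrightarrow> b = d \<and> a \<noteq> c"
    "ptyp (a,b) (c,d) = T2 \<longleftrightarrow> a \<noteq> c \<and> a \<noteq> d \<and> b \<noteq> c \<and> b \<noteq> d"
  using assms by (auto simp: ptyp_def)

lemma tuples2[simp]: "[a, b] \<in> tuples A 2 \<longleftrightarrow> a \<in> A \<and> b \<in> A"
  by (auto simp: tuples_def numeral_2_eq_2)

lemma proj_ops: "i < n \<Longrightarrow> proj A n i \<in> ops A n"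
  by (auto simp: ops_def proj_def tuples_def)

lemma ops2_in: "f \<in> ops A 2 \<Longrightarrow> a \<in> A \<Longrightarrow> b \<in> A \<Longrightarrow> f [a, b] \<in> A"
  by (auto simp: ops_def)

lemma cons2: "conservative A F \<Longrightarrow> f \<in> F \<Longrightarrow> f \<in> ops A 2 \<Longrightarrow> a \<in> A \<Longrightarrow> b \<in> A
   \<Longrightarrow> f [a, b] = a \<or> f [a, b] = b"
proof -
  assume c: "conservative A F" "f \<in> F" "f \<in> ops A 2" "a \<in> A" "b \<in> A"
  then have "[a, b] \<in> tuples A 2" by simp
  then have "f [a, b] \<in> set [a, b]" using c unfolding conservative_def by blast
  then show ?thesis by simp
qed

lemma rhd0_iff: "(x, y) \<in> rhd A F 0 \<longleftrightarrow> x \<in> A22 A \<and> y \<in> A22 A \<and>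
   (\<forall>f \<in> F \<inter> ops A 2. f [fst x, snd x] = fst x \<longrightarrow> f [fst y, snd y] = fst y)"
  by (simp add: rhd_def app2_def entry_def)

lemma rhd_perm:
  assumes sym: "symmetric A F" and bij: "bij_betw \<sigma> A A" and r: "(x, y) \<in> rhd A F 0"
  shows "(map_prod \<sigma> \<sigma> x, map_prod \<sigma> \<sigma> y) \<in> rhd A F 0"
proof -
  obtain a b c d where xy: "x = (a, b)" "y = (c, d)" by (cases x, cases y) auto
  have inj: "inj_on \<sigma> A" and im: "\<sigma> ` A = A" using bij by (auto simp: bij_betw_def)
  have ab: "a \<in> A" "b \<in> A" "a \<noteq> b" "c \<in> A" "d \<in> A" "c \<noteq> d" using r xy by (auto simp: rhd0_iff)
  have sab: "\<sigma> a \<in> A" "\<sigma> b \<in> A" "\<sigma> a \<noteq> \<sigma> b" "\<sigma> c \<in> A" "\<sigma> d \<in> A" "\<sigma> c \<noteq> \<sigma> d"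
    using ab inj im by (auto dest: inj_onD)
  have "f [\<sigma> c, \<sigma> d] = \<sigma> c" if f: "f \<in> F" "f \<in> ops A 2" and fa: "f [\<sigma> a, \<sigma> b] = \<sigma> a" for f
  proof -
    let ?g = "conj_op A 2 \<sigma> f"
    have gF: "?g \<in> F" using sym f bij unfolding symmetric_def by blast
    have gops: "?g \<in> ops A 2"
    proof -
      have "inv_into A \<sigma> (f (map \<sigma> xs)) \<in> A" if "xs \<in> tuples A 2" for xs
      proof (rule inv_into_into)
        have "set (map \<sigma> xs) \<subseteq> A" using that im by (auto simp: tuples_def)
        then have "f (map \<sigma> xs) \<in> A" using f(2) that by (auto simp: ops_def tuples_def)
        then show "f (map \<sigma> xs) \<in> \<sigma> ` A" using im by simp
      qed
      then show ?thesis by (auto simp: ops_def conj_op_def)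
    qed
    have "?g [a, b] = a" using ab fa inj by (simp add: conj_op_def inv_into_f_f)
    then have "?g [c, d] = c" using r xy gF gops by (auto simp: rhd0_iff)
    then have "inv_into A \<sigma> (f [\<sigma> c, \<sigma> d]) = c" using ab by (simp add: conj_op_def)
    then have "\<sigma> (inv_into A \<sigma> (f [\<sigma> c, \<sigma> d])) = \<sigma> c" by simp
    moreover have "f [\<sigma> c, \<sigma> d] \<in> \<sigma> ` A" using im ops2_in[OF f(2) sab(4,5)] by simp
    ultimately show ?thesis by (simp add: f_inv_into_f)
  qed
  then show ?thesis using xy sab by (auto simp: rhd0_iff)
qed

lemma rhd_swap:
  assumes cl: "clone A F" and con: "conservative A F" and r: "(x, y) \<in> rhd A F 0"
  shows "(prod.swap y, prod.swap x) \<in> rhd A F 0"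
proof -
  obtain a b c d where xy: "x = (a, b)" "y = (c, d)" by (cases x, cases y) auto
  have ab: "a \<in> A" "b \<in> A" "a \<noteq> b" "c \<in> A" "d \<in> A" "c \<noteq> d" using r xy by (auto simp: rhd0_iff)
  have "f [b, a] = b" if f: "f \<in> F" "f \<in> ops A 2" and fd: "f [d, c] = d" for f
  proof (rule ccontr)
    assume "f [b, a] \<noteq> b"
    then have fba: "f [b, a] = a" using cons2[OF con f] ab by blast
    let ?g = "compose A 2 f [proj A 2 1, proj A 2 0]"
    have p: "proj A 2 1 \<in> F \<inter> ops A 2" "proj A 2 0 \<in> F \<inter> ops A 2"
      using cl proj_ops[of 1 2 A] proj_ops[of 0 2 A] unfolding clone_def by auto
    have gF: "?g \<in> F" using cl f p unfolding clone_def by (auto simp del: One_nat_def)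
    have gxy: "?g [u, v] = f [v, u]" if "u \<in> A" "v \<in> A" for u v
      using that by (simp add: compose_def proj_def)
    have gops: "?g \<in> ops A 2"
    proof -
      have "?g xs \<in> A" if "xs \<in> tuples A 2" for xs
      proof -
        have l: "length xs = Suc (Suc 0)" using that by (simp add: tuples_def)
        then obtain u v where xs: "xs = [u, v]"
          by (metis (no_types) length_0_conv length_Suc_conv)
        then have "u \<in> A" "v \<in> A" using that by auto
        then show ?thesis using xs gxy ops2_in[OF f(2)] by simp
      qed
      then show ?thesis by (auto simp: ops_def compose_def)
    qed
    have "?g [a, b] = a" using gxy ab fba by simp
    then have "?g [c, d] = c" using r xy gF gops by (auto simp: rhd0_iff)
    then have "f [d, c] = c" using gxy ab by simp
    then show False using fd ab by simp
  qed
  then show ?thesis using xy ab by (auto simp: rhd0_iff)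
qed

lemma rhd1_conv:
  assumes con: "conservative A F"
  shows "rhd A F 1 = (rhd A F 0)\<inverse>"
proof -
  have "(x, y) \<in> rhd A F 1 \<longleftrightarrow> (y, x) \<in> rhd A F 0" for x y
  proof -
    obtain a b c d where xy: "x = (a, b)" "y = (c, d)" by (cases x, cases y) auto
    show ?thesis
    proof (cases "x \<in> A22 A \<and> y \<in> A22 A")
      case True
      then have ab: "a \<in> A" "b \<in> A" "a \<noteq> b" "c \<in> A" "d \<in> A" "c \<noteq> d" using xy by auto
      have "(\<forall>f\<in>F \<inter> ops A 2. f [a, b] = b \<longrightarrow> f [c, d] = d) \<longleftrightarrow>
            (\<forall>f\<in>F \<inter> ops A 2. f [c, d] = c \<longrightarrow> f [a, b] = a)"
      proof (intro iffI ballI impI)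
        fix f assume h: "\<forall>f\<in>F \<inter> ops A 2. f [a, b] = b \<longrightarrow> f [c, d] = d" and f: "f \<in> F \<inter> ops A 2"
          and fc: "f [c, d] = c"
        show "f [a, b] = a"
        proof (rule ccontr)
          assume "f [a, b] \<noteq> a"
          then have "f [a, b] = b" using cons2[OF con, of f a b] f ab by blast
          then show False using h f fc ab by auto
        qed
      next
        fix f assume h: "\<forall>f\<in>F \<inter> ops A 2. f [c, d] = c \<longrightarrow> f [a, b] = a" and f: "f \<in> F \<inter> ops A 2"
          and fb: "f [a, b] = b"
        show "f [c, d] = d"
        proof (rule ccontr)
          assume "f [c, d] \<noteq> d"
          then have "f [c, d] = c" using cons2[OF con, of f c d] f ab by blast
          then show False using h f fb ab by auto
        qed
      qed
      then show ?thesis using xy ab by (simp add: rhd_def rhd0_iff app2_def entry_def)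
    next
      case False
      then show ?thesis by (auto simp: rhd_def)
    qed
  qed
  then show ?thesis by auto
qed


lemma rhd_refl: "x \<in> A22 A \<Longrightarrow> (x, x) \<in> rhd A F 0"
  by (simp add: rhd0_iff)

lemma rhd_trans: "(x, y) \<in> rhd A F 0 \<Longrightarrow> (y, z) \<in> rhd A F 0 \<Longrightarrow> (x, z) \<in> rhd A F 0"
  by (simp add: rhd0_iff)

lemma perm_lists:
  assumes sym: "symmetric A F" and r: "(x, y) \<in> rhd A F 0"
    and "distinct us" "distinct vs" "length us = length vs" "set us \<subseteq> A" "set vs \<subseteq> A"
    and m: "\<And>\<sigma>. map \<sigma> us = vs \<Longrightarrow> map_prod \<sigma> \<sigma> x = x' \<and> map_prod \<sigma> \<sigma> y = y'"
  shows "(x', y') \<in> rhd A F 0"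
proof -
  obtain \<sigma> where "bij_betw \<sigma> A A" "map \<sigma> us = vs" using exists_perm assms by metis
  then show ?thesis using rhd_perm[OF sym, of \<sigma> x y] r m by metis
qed

lemma rhd_inv:
  assumes sym: "symmetric A F" and r: "(x, y) \<in> rhd A F 0"
    and x': "x' \<in> A22 A" and y': "y' \<in> A22 A" and t: "ptyp x' y' = ptyp x y"
  shows "(x', y') \<in> rhd A F 0"
proof -
  obtain a b c d where xy: "x = (a, b)" "y = (c, d)" by (cases x, cases y) auto
  obtain a' b' c' d' where xy': "x' = (a', b')" "y' = (c', d')" by (cases x', cases y') auto
  have ab: "a \<in> A" "b \<in> A" "a \<noteq> b" "c \<in> A" "d \<in> A" "c \<noteq> d" using r xy by (auto simp: rhd0_iff)
  have ab': "a' \<in> A" "b' \<in> A" "a' \<noteq> b'" "c' \<in> A" "d' \<in> A" "c' \<noteq> d'" using x' y' xy' by auto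
  note P = perm_lists[OF sym r]
  note S = ptyp_simps[OF ab(3,6)] ptyp_simps[OF ab'(3,6)]
  show ?thesis
  proof (cases "ptyp x y")
    case T0
    then show ?thesis using t S xy xy' ab ab' by (auto intro!: P[of "[a,b]" "[a',b']"])
  next
    case T1
    then show ?thesis using t S xy xy' ab ab' by (auto intro!: P[of "[a,b]" "[a',b']"])
  next
    case T00
    then show ?thesis using t S xy xy' ab ab' by (auto intro!: P[of "[a,b,d]" "[a',b',d']"])
  next
    case T01
    then show ?thesis using t S xy xy' ab ab' by (auto intro!: P[of "[a,b,c]" "[a',b',c']"])
  next
    case T10
    then show ?thesis using t S xy xy' ab ab' by (auto intro!: P[of "[a,b,d]" "[a',b',d']"])
  next
    case T11
    then show ?thesis using t S xy xy' ab ab' by (auto intro!: P[of "[a,b,c]" "[a',b',c']"])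
  next
    case T2
    then show ?thesis using t S xy xy' ab ab' by (auto intro!: P[of "[a,b,c,d]" "[a',b',c',d']"])
  qed
qed


lemma classify:
  assumes cl: "clone A F" and con: "conservative A F" and sym: "symmetric A F"
  defines "R \<equiv> rhd A F 0"
  shows "(\<forall>x\<in>A22 A. \<forall>y\<in>A22 A. (x, y) \<in> R) \<or>
     (\<forall>x\<in>A22 A. \<forall>y\<in>A22 A. (x, y) \<in> R \<longleftrightarrow> ptyp x y = T0) \<or>
     (\<forall>x\<in>A22 A. \<forall>y\<in>A22 A. (x, y) \<in> R \<longleftrightarrow> ptyp x y \<in> {T0, T1}) \<or>
     (card A = 4 \<and> (\<forall>x\<in>A22 A. \<forall>y\<in>A22 A. (x, y) \<in> R \<longleftrightarrow> ptyp x y \<in> {T0, T1, T2})) \<or>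
     (card A = 3 \<and> (\<forall>x\<in>A22 A. \<forall>y\<in>A22 A. (x, y) \<in> R \<longleftrightarrow> ptyp x y \<in> {T0, T01, T10}))"
proof -
  define W where "W \<tau> \<longleftrightarrow> (\<exists>x y. (x, y) \<in> R \<and> ptyp x y = \<tau>)" for \<tau>
  define I where "I \<tau> \<longleftrightarrow> (\<forall>x\<in>A22 A. \<forall>y\<in>A22 A. ptyp x y = \<tau> \<longrightarrow> (x, y) \<in> R)" for \<tau>
  have WI: "I \<tau>" if "W \<tau>" for \<tau>
    using that rhd_inv[OF sym] unfolding W_def I_def R_def by metis
  have RA: "a \<in> A \<and> b \<in> A \<and> a \<noteq> b \<and> c \<in> A \<and> d \<in> A \<and> c \<noteq> d" if "((a, b), (c, d)) \<in> R" for a b c d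
    using that unfolding R_def by (auto simp: rhd0_iff)
  have tr: "(x, z) \<in> R" if "(x, y) \<in> R" "(y, z) \<in> R" for x y z
    using that rhd_trans unfolding R_def by metis
  have swp: "((d, c), (b, a)) \<in> R" if "((a, b), (c, d)) \<in> R" for a b c d
    using rhd_swap[OF cl con that[unfolded R_def]] unfolding R_def by (simp add: ptyp_simps)
  have wit: "W (ptyp x y)" if "(x, y) \<in> R" for x y
    using that unfolding W_def by blast
  have useI: "(x, y) \<in> R" if "I (ptyp x y)" "x \<in> A22 A" "y \<in> A22 A" for x y
    using that unfolding I_def by blast
  have useI2: "(x, y) \<in> R" if "I \<tau>" "ptyp x y = \<tau>" "x \<in> A22 A" "y \<in> A22 A" for x y \<tau>
    using that unfolding I_def by blast
  have wit2: "W \<tau>" if "(x, y) \<in> R" "ptyp x y = \<tau>" for x y \<tau>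
    using that unfolding W_def by blast
  have I0: "I T0"
    unfolding I_def R_def by (auto simp: rhd_def A22_def ptyp_def)
  note PS = ptyp_simps
  have lst: "\<exists>\<tau>\<in>{T0,T1,T00,T01,T10,T11,T2}. t = \<tau>" for t
    by (cases t) auto
  show ?thesis
  proof (cases "W T00 \<or> W T11")
    case True
    obtain p q r where pqr: "((p, q), (p, r)) \<in> R" and pqrA: "p \<in> A" "q \<in> A" "r \<in> A" "p \<noteq> q" "p \<noteq> r" "q \<noteq> r"
    proof (cases "W T00")
      case True
      then obtain x y where xy: "(x, y) \<in> R" "ptyp x y = T00" unfolding W_def by blast
      obtain a b c d where e: "x = (a, b)" "y = (c, d)" by (cases x, cases y) auto
      have ab: "a \<in> A" "b \<in> A" "a \<noteq> b" "c \<in> A" "d \<in> A" "c \<noteq> d" using RA xy e by metis+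
      have "a = c" "b \<noteq> d" using xy e PS[OF ab(3,6)] by auto
      then show ?thesis using that[of a b d] xy e ab by auto
    next
      case False
      then obtain x y where xy: "(x, y) \<in> R" "ptyp x y = T11" using \<open>W T00 \<or> W T11\<close> unfolding W_def by blast
      obtain a b c d where e: "x = (a, b)" "y = (c, d)" by (cases x, cases y) auto
      have ab: "a \<in> A" "b \<in> A" "a \<noteq> b" "c \<in> A" "d \<in> A" "c \<noteq> d" using RA xy e by metis+
      have "b = d" "a \<noteq> c" using xy e PS[OF ab(3,6)] by auto
      then show ?thesis using that[of b c a] swp[of a b c d] xy e ab by auto
    qed
    have I00: "I T00" by (rule WI, rule wit2[OF pqr]) (use PS pqrA in \<open>simp add: ptyp_simps\<close>)
    have I11: "I T11" by (rule WI, rule wit2[OF swp[OF pqr]]) (use PS pqrA in \<open>simp add: ptyp_simps\<close>)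
    have m00: "((a, b), (a, c)) \<in> R" if "a \<in> A" "b \<in> A" "c \<in> A" "a \<noteq> b" "a \<noteq> c" "b \<noteq> c" for a b c
      using useI2[OF I00, of "(a, b)" "(a, c)"] I00 that PS by (simp add: ptyp_simps)
    have m11: "((a, b), (c, b)) \<in> R" if "a \<in> A" "b \<in> A" "c \<in> A" "a \<noteq> b" "a \<noteq> c" "b \<noteq> c" for a b c
      using useI2[OF I11, of "(a, b)" "(c, b)"] I11 that PS by (simp add: ptyp_simps)
    have "\<forall>x\<in>A22 A. \<forall>y\<in>A22 A. (x, y) \<in> R"
    proof (intro ballI)
      fix x y assume xy: "x \<in> A22 A" "y \<in> A22 A"
      obtain a b c d where e: "x = (a, b)" "y = (c, d)" by (cases x, cases y) auto
      have ab: "a \<in> A" "b \<in> A" "a \<noteq> b" "c \<in> A" "d \<in> A" "c \<noteq> d" using xy e by auto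
      note S = PS[OF ab(3,6)]
      obtain e' where e': "e' \<in> A" "e' \<noteq> a" "e' \<noteq> b" using pqrA by metis
      show "(x, y) \<in> R"
      proof (cases "ptyp (a, b) (c, d)")
        case T0 then show ?thesis using useI2[OF I0 _ xy] e by blast
      next
        case T00 then show ?thesis using useI2[OF I00 _ xy] e by blast
      next
        case T11 then show ?thesis using useI2[OF I11 _ xy] e by blast
      next
        case T10
        then have "b = c" "a \<noteq> d" using S by auto
        then show ?thesis using e ab m00[of a b d] m11[of a d b] tr by metis
      next
        case T01
        then have "a = d" "b \<noteq> c" using S by auto
        then show ?thesis using e ab m11[of a b c] m00[of c b a] tr by metis
      next
        case T2
        then have "a \<noteq> c" "a \<noteq> d" "b \<noteq> c" "b \<noteq> d" using S by auto
        then show ?thesis using e ab m00[of a b d] m11[of a d c] tr by metis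
      next
        case T1
        then have "a = d" "b = c" using S by auto
        then show ?thesis using e ab e' m11[of a b e'] m00[of e' b a] m11[of e' a b] tr by metis
      qed
    qed
    then show ?thesis by blast
  next
    case notA: False
    then have n00: "\<not> W T00" and n11: "\<not> W T11" by auto
    show ?thesis
    proof (cases "W T01 \<or> W T10")
      case True
      obtain p q r where pqr: "((p, q), (r, p)) \<in> R" and pqrA: "p \<in> A" "q \<in> A" "r \<in> A" "p \<noteq> q" "p \<noteq> r" "q \<noteq> r"
      proof (cases "W T01")
        case True
        then obtain x y where "(x, y) \<in> R" "ptyp x y = T01" unfolding W_def by blast
        moreover obtain a b c d where "x = (a, b)" "y = (c, d)" by (cases x, cases y) auto
        ultimately show ?thesis using that RA PS by metis
      next
        case False
        then obtain x y where xy: "(x, y) \<in> R" "ptyp x y = T10" using True unfolding W_def by blast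
        obtain a b c d where e: "x = (a, b)" "y = (c, d)" by (cases x, cases y) auto
        have ab: "a \<in> A" "b \<in> A" "a \<noteq> b" "c \<in> A" "d \<in> A" "c \<noteq> d" using RA xy e by metis+
        have "b = c" "a \<noteq> d" using xy e PS[OF ab(3,6)] by auto
        have I10: "I T10" using WI xy unfolding W_def by blast
        have "((b, d), (d, a)) \<in> R"
          using useI2[OF I10, of "(b, d)" "(d, a)"] I10 ab \<open>a \<noteq> d\<close> \<open>b = c\<close> PS by (simp add: ptyp_simps)
        then have "((a, b), (d, a)) \<in> R" using xy e \<open>b = c\<close> tr by metis
        then show ?thesis using that ab \<open>a \<noteq> d\<close> \<open>b = c\<close> by metis
      qed
      have I01: "I T01" by (rule WI, rule wit2[OF pqr]) (use PS pqrA in \<open>simp add: ptyp_simps\<close>)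
      have m01: "((a, b), (c, a)) \<in> R" if "a \<in> A" "b \<in> A" "c \<in> A" "a \<noteq> b" "a \<noteq> c" "b \<noteq> c" for a b c
        using useI2[OF I01, of "(a, b)" "(c, a)"] I01 that PS by (simp add: ptyp_simps)
      have m10: "((c, a), (a, b)) \<in> R" if "a \<in> A" "b \<in> A" "c \<in> A" "a \<noteq> b" "a \<noteq> c" "b \<noteq> c" for a b c
        using m01[of c a b] m01[of b c a] that tr by metis
      have I10: "I T10" by (rule WI, rule wit2[OF m10[OF pqrA]]) (use PS pqrA in \<open>simp add: ptyp_simps\<close>)
      have Aeq: "A = {p, q, r}"
      proof
        show "A \<subseteq> {p, q, r}"
        proof
          fix e assume eA: "e \<in> A"
          show "e \<in> {p, q, r}"
          proof (rule ccontr)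
            assume "e \<notin> {p, q, r}"
            then have pe: "((p, q), (p, e)) \<in> R"
              using m01[of p q r] m01[of r p e] m01[of e r p] pqrA eA tr by (simp add: ptyp_simps) metis
            moreover have "ptyp (p, q) (p, e) = T00" using pqrA \<open>e \<notin> {p, q, r}\<close> by (auto simp: ptyp_def)
            ultimately show False using n00 wit2 by blast
          qed
        qed
      qed (use pqrA in auto)
      have c3: "card A = 3" using Aeq pqrA by (simp add: ptyp_simps)
      have n1: "\<not> W T1"
      proof
        assume "W T1"
        then have "I T1" by (rule WI)
        then have "((p, q), (q, p)) \<in> R" using useI2[of T1 "(p, q)" "(q, p)"] pqrA by (simp add: ptyp_simps)
        then have pe: "((p, q), (r, q)) \<in> R" using m01[of q p r] pqrA tr by metis
        moreover have "ptyp (p, q) (r, q) = T11" using pqrA by (simp add: ptyp_simps)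
        ultimately show False using n11 wit2 by blast
      qed
      have "\<forall>x\<in>A22 A. \<forall>y\<in>A22 A. (x, y) \<in> R \<longleftrightarrow> ptyp x y \<in> {T0, T01, T10}"
      proof (intro ballI iffI)
        fix x y assume xy: "x \<in> A22 A" "y \<in> A22 A" and "(x, y) \<in> R"
        have w: "W (ptyp x y)" using \<open>(x, y) \<in> R\<close> by (rule wit)
        obtain a b c d where e: "x = (a, b)" "y = (c, d)" by (cases x, cases y) auto
        have ab: "a \<in> A" "b \<in> A" "a \<noteq> b" "c \<in> A" "d \<in> A" "c \<noteq> d" using xy e by auto
        have "ptyp x y \<noteq> T2"
        proof
          assume "ptyp x y = T2"
          then have "a \<noteq> c" "a \<noteq> d" "b \<noteq> c" "b \<noteq> d" using e PS[OF ab(3,6)] by auto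
          then show False using ab Aeq by auto
        qed
        then show "ptyp x y \<in> {T0, T01, T10}" using w n00 n11 n1 lst[of "ptyp x y"] by auto
      next
        fix x y assume xy: "x \<in> A22 A" "y \<in> A22 A" and "ptyp x y \<in> {T0, T01, T10}"
        then show "(x, y) \<in> R" using useI2[of _ x y] xy I0 I01 I10 by blast
      qed
      then show ?thesis using c3 by blast
    next
      case notB: False
      then have n01: "\<not> W T01" and n10: "\<not> W T10" by auto
      show ?thesis
      proof (cases "W T2")
        case True
        then obtain x y where xy: "(x, y) \<in> R" "ptyp x y = T2" unfolding W_def by blast
        obtain p q r s where e: "x = (p, q)" "y = (r, s)" by (cases x, cases y) auto
        have ab: "p \<in> A" "q \<in> A" "p \<noteq> q" "r \<in> A" "s \<in> A" "r \<noteq> s" using RA xy e by metis+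
        have d: "p \<noteq> r" "p \<noteq> s" "q \<noteq> r" "q \<noteq> s" using xy e PS[OF ab(3,6)] by auto
        have I2: "I T2" using WI True by blast
        have m2: "((a, b), (c, d)) \<in> R" if "a \<in> A" "b \<in> A" "c \<in> A" "d \<in> A" "a \<noteq> b" "c \<noteq> d"
          "a \<noteq> c" "a \<noteq> d" "b \<noteq> c" "b \<noteq> d" for a b c d
          using useI2[OF I2, of "(a, b)" "(c, d)"] I2 that PS by (simp add: ptyp_simps)
        have pq: "((p, q), (r, s)) \<in> R" using xy e by (simp add: ptyp_simps)
        have Aeq: "A = {p, q, r, s}"
        proof
          show "A \<subseteq> {p, q, r, s}"
          proof
            fix e' assume eA: "e' \<in> A"
            show "e' \<in> {p, q, r, s}"
            proof (rule ccontr)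
              assume ne: "e' \<notin> {p, q, r, s}"
              then have "((r, s), (p, e')) \<in> R" using m2[of r s p e'] ab d eA by auto
              then have pe: "((p, q), (p, e')) \<in> R" using pq tr by metis
              moreover have "ptyp (p, q) (p, e') = T00" using ab ne by (auto simp: ptyp_def)
              ultimately show False using n00 wit2 by blast
            qed
          qed
        qed (use ab in auto)
        have c4: "card A = 4" using Aeq ab d by (simp add: ptyp_simps)
        have "((r, s), (q, p)) \<in> R" using m2[of r s q p] ab d by auto
        then have pe: "((p, q), (q, p)) \<in> R" using pq tr by metis
        then have I1: "I T1" by (intro WI wit2[OF pe]) (use PS ab in \<open>simp add: ptyp_simps\<close>)
        have "\<forall>x\<in>A22 A. \<forall>y\<in>A22 A. (x, y) \<in> R \<longleftrightarrow> ptyp x y \<in> {T0, T1, T2}"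
        proof (intro ballI iffI)
          fix x y assume "x \<in> A22 A" "y \<in> A22 A" and "(x, y) \<in> R"
          have w: "W (ptyp x y)" using \<open>(x, y) \<in> R\<close> by (rule wit)
          then show "ptyp x y \<in> {T0, T1, T2}" using n00 n11 n01 n10 lst[of "ptyp x y"] by auto
        next
          fix x y assume xy: "x \<in> A22 A" "y \<in> A22 A" and "ptyp x y \<in> {T0, T1, T2}"
          then show "(x, y) \<in> R" using useI2[of _ x y] xy I0 I1 I2 by blast
        qed
        then show ?thesis using c4 by blast
      next
        case n2: False
        show ?thesis
        proof (cases "W T1")
          case True
          then have I1: "I T1" by (rule WI)
          have "\<forall>x\<in>A22 A. \<forall>y\<in>A22 A. (x, y) \<in> R \<longleftrightarrow> ptyp x y \<in> {T0, T1}"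
          proof (intro ballI iffI)
            fix x y assume "x \<in> A22 A" "y \<in> A22 A" and "(x, y) \<in> R"
            have w: "W (ptyp x y)" using \<open>(x, y) \<in> R\<close> by (rule wit)
            then show "ptyp x y \<in> {T0, T1}" using n00 n11 n01 n10 n2 lst[of "ptyp x y"] by auto
          next
            fix x y assume xy: "x \<in> A22 A" "y \<in> A22 A" and "ptyp x y \<in> {T0, T1}"
            then show "(x, y) \<in> R" using useI2[of _ x y] xy I0 I1 by blast
          qed
          then show ?thesis by blast
        next
          case n1: False
          have "\<forall>x\<in>A22 A. \<forall>y\<in>A22 A. (x, y) \<in> R \<longleftrightarrow> ptyp x y = T0"
          proof (intro ballI iffI)
            fix x y assume "x \<in> A22 A" "y \<in> A22 A" and "(x, y) \<in> R"
            have w: "W (ptyp x y)" using \<open>(x, y) \<in> R\<close> by (rule wit)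
            then show "ptyp x y = T0" using n00 n11 n01 n10 n2 n1 lst[of "ptyp x y"] by auto
          next
            fix x y assume xy: "x \<in> A22 A" "y \<in> A22 A" and "ptyp x y = T0"
            then show "(x, y) \<in> R" using useI2[of _ x y] xy I0 by blast
          qed
          then show ?thesis by blast
        qed
      qed
    qed
  qed
qed


lemma rhd_sym:
  assumes sym: "symmetric A F" and r: "(x, y) \<in> rhd A F 0"
  shows "(y, x) \<in> rhd A F 0"
proof -
  obtain a b c d where e: "x = (a, b)" "y = (c, d)" by (cases x, cases y) auto
  have ab: "a \<in> A" "b \<in> A" "a \<noteq> b" "c \<in> A" "d \<in> A" "c \<noteq> d" using r e by (auto simp: rhd0_iff)
  note S = ptyp_simps[OF ab(3,6)] ptyp_simps[OF ab(6,3)]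
  note inv = rhd_inv[OF sym r]
  show ?thesis
  proof (cases "ptyp x y")
    case T01
    then have "a = d" "b \<noteq> c" using S e by auto
    then have "((c, a), (b, c)) \<in> rhd A F 0" "((b, c), (a, b)) \<in> rhd A F 0"
      using inv[of "(c, a)" "(b, c)"] inv[of "(b, c)" "(a, b)"] e ab T01 by (auto simp: ptyp_def)
    then show ?thesis using e \<open>a = d\<close> rhd_trans by metis
  next
    case T10
    then have "b = c" "a \<noteq> d" using S e by auto
    then have "((b, d), (d, a)) \<in> rhd A F 0" "((d, a), (a, b)) \<in> rhd A F 0"
      using inv[of "(b, d)" "(d, a)"] inv[of "(d, a)" "(a, b)"] e ab T10 by (auto simp: ptyp_def)
    then show ?thesis using e \<open>b = c\<close> rhd_trans by metis
  next
    case T0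
    then have "a = c" "b = d" using S e by auto
    then show ?thesis using r e by simp
  next
    case T1
    then have "a = d" "b = c" using S e by auto
    then have "ptyp y x = ptyp x y" using e ab T1 by (simp add: ptyp_def)
    then show ?thesis using inv e ab by simp
  next
    case T00
    then have "a = c" "b \<noteq> d" using S e by auto
    then have "ptyp y x = ptyp x y" using e ab T00 by (simp add: ptyp_def)
    then show ?thesis using inv e ab by simp
  next
    case T11
    then have "b = d" "a \<noteq> c" using S e by auto
    then have "ptyp y x = ptyp x y" using e ab T11 by (simp add: ptyp_def)
    then show ?thesis using inv e ab by simp
  next
    case T2
    then have "a \<noteq> c" "a \<noteq> d" "b \<noteq> c" "b \<noteq> d" using S e by auto
    then have "ptyp y x = ptyp x y" using e ab T2 by (auto simp: ptyp_def)
    then show ?thesis using inv e ab by simp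
  qed
qed

lemma R2_eq:
  assumes cl: "clone A F" and con: "conservative A F" and sym: "symmetric A F"
  shows "R2 A F \<inter> (A22 A \<times> A22 A) = rhd A F 0"
proof (intro set_eqI iffI)
  fix z assume z: "z \<in> R2 A F \<inter> (A22 A \<times> A22 A)"
  obtain a b c d where e: "z = ((a, b), (c, d))" by (cases z) auto
  have ab: "a \<in> A" "b \<in> A" "a \<noteq> b" "c \<in> A" "d \<in> A" "c \<noteq> d" using z e by auto
  obtain \<sigma> where s: "\<forall>f \<in> F \<inter> ops A 2. app2 f (c, d) = \<sigma> (app2 f (a, b))"
    using z e unfolding R2_def by auto
  have p: "proj A 2 1 \<in> F \<inter> ops A 2" "proj A 2 0 \<in> F \<inter> ops A 2"
    using cl proj_ops[of 1 2 A] proj_ops[of 0 2 A] unfolding clone_def by auto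
  have "app2 (proj A 2 0) (c, d) = \<sigma> (app2 (proj A 2 0) (a, b))" using s p(2) by blast
  then have "c = \<sigma> a" using ab by (simp add: app2_def proj_def)
  moreover have "f [c, d] = c" if "f \<in> F" "f \<in> ops A 2" "f [a, b] = a" for f
  proof -
    have "app2 f (c, d) = \<sigma> (app2 f (a, b))" using s that by blast
    then show ?thesis using that \<open>c = \<sigma> a\<close> by (simp add: app2_def)
  qed
  ultimately show "z \<in> rhd A F 0" using e ab by (auto simp: rhd0_iff)
next
  fix z assume z: "z \<in> rhd A F 0"
  obtain a b c d where e: "z = ((a, b), (c, d))" by (cases z) auto
  have ab: "a \<in> A" "b \<in> A" "a \<noteq> b" "c \<in> A" "d \<in> A" "c \<noteq> d" using z e by (auto simp: rhd0_iff)
  have zs: "((c, d), (a, b)) \<in> rhd A F 0" using rhd_sym[OF sym] z e by blast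
  obtain \<sigma> where s: "bij_betw \<sigma> A A" "map \<sigma> [a, b] = [c, d]"
    using exists_perm[of "[a, b]" "[c, d]" A] ab by auto
  have "app2 f (c, d) = \<sigma> (app2 f (a, b))" if f: "f \<in> F" "f \<in> ops A 2" for f
  proof (cases "f [a, b] = a")
    case True
    then have "f [c, d] = c" using z e f by (auto simp: rhd0_iff)
    then show ?thesis using True s by (simp add: app2_def)
  next
    case False
    then have fb: "f [a, b] = b" using cons2[OF con f ab(1,2)] by blast
    have "f [c, d] \<noteq> c" using zs f False by (auto simp: rhd0_iff)
    then have "f [c, d] = d" using cons2[OF con f ab(4,5)] by blast
    then show ?thesis using fb s by (simp add: app2_def)
  qed
  then show "z \<in> R2 A F \<inter> (A22 A \<times> A22 A)" using s e ab unfolding R2_def by auto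
qed

lemma all_less2: "(\<forall>i<(2::nat). P i) = (P 0 \<and> P 1)"
  by (auto simp: numeral_2_eq_2 less_Suc_eq)

theorem mainTheorem18:
  fixes A :: "'a set" and F :: "('a list \<Rightarrow> 'a) set"
  assumes "clone A F" and "conservative A F" and "symmetric A F"
  shows "rhd A F 0 = rhd A F 1 \<and> rhd A F 1 = R2 A F \<inter> (A22 A \<times> A22 A) \<and>
    ((\<forall>i<2. \<forall>x\<in>A22 A. \<forall>y\<in>A22 A. (x, y) \<in> rhd A F i) \<or>
     (\<forall>i<2. \<forall>x\<in>A22 A. \<forall>y\<in>A22 A. (x, y) \<in> rhd A F i \<longleftrightarrow> ptyp x y = T0) \<or>
     (\<forall>i<2. \<forall>x\<in>A22 A. \<forall>y\<in>A22 A. (x, y) \<in> rhd A F i \<longleftrightarrow> ptyp x y \<in> {T0, T1}) \<or>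
     (card A = 4 \<and> (\<forall>i<2. \<forall>x\<in>A22 A. \<forall>y\<in>A22 A. (x, y) \<in> rhd A F i \<longleftrightarrow> ptyp x y \<in> {T0, T1, T2})) \<or>
     (card A = 3 \<and> (\<forall>i<2. \<forall>x\<in>A22 A. \<forall>y\<in>A22 A. (x, y) \<in> rhd A F i \<longleftrightarrow> ptyp x y \<in> {T0, T01, T10})))"
proof -
  have r1: "rhd A F 1 = rhd A F 0"
    using rhd1_conv[OF assms(2)] rhd_sym[OF assms(3)] by auto
  have eqi: "rhd A F i = rhd A F 0" if "i < 2" for i :: nat
    using that r1 by (cases i) (auto simp: numeral_2_eq_2 less_Suc_eq)
  have R2e: "R2 A F \<inter> (A22 A \<times> A22 A) = rhd A F 0" by (rule R2_eq[OF assms])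
  show ?thesis
    unfolding all_less2 r1 R2e using classify[OF assms] by (simp only: conj_absorb simp_thms)
qed

end
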